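(* Let $N\ge 2$ and let $A=J-I$ be the adjacency matrix of the complete graph $K_N$ ($J$ the all-ones matrix). For integers $k\ge1$, $m\ge1$ define $$\mathcal A[k,m]=\sum_{\substack{j_1+\cdots+j_k=m\\ j_i\ge1}}\ \prod_{i=1}^k (A^{j_i})_{11}.$$ Then $\mathcal A[k,m]=0$ whenever $k>m/2$, and for $1\le k\le m/2$, $$\mathcal A[k,m]=(-1)^m(N-1)^k\sum_{r=0}^{m-2k}\binom{k+r-1}{r}\binom{m-k-r-1}{m-2k-r}(-1)^r(N-1)^r.$$ Moreover $\mathcal A[1,m]=\sum_{j=1}^{m-1}(-1)^{m-1-j}(N-1)^j$.
   Context: $(A^{j})_{11}$ is the number of closed walks of length $j$ starting and ending at node $1$. *)

theory Defs
  imports Main "Jordan_Normal_Form.Matrix"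
begin

text \<open>Adjacency matrix A = J - I of the complete graph on N vertices (vertices 0..N-1;
  the paper's node 1 is index 0).\<close>
definition complete_adj :: "nat \<Rightarrow> int mat" where
  "complete_adj N = mat N N (\<lambda>_. 1) - 1\<^sub>m N"

definition compositions :: "nat \<Rightarrow> nat \<Rightarrow> nat list set" where
  "compositions k m = {js. length js = k \<and> (\<forall>j\<in>set js. 1 \<le> j) \<and> sum_list js = m}"

definition calA :: "nat \<Rightarrow> nat \<Rightarrow> nat \<Rightarrow> int" where
  "calA N k m = (\<Sum>js\<in>compositions k m.
      prod_list (map (\<lambda>j. (complete_adj N ^\<^sub>m j) $$ (0, 0)) js))"

end

theory Submission
  imports Defs "HOL-Computational_Algebra.Formal_Power_Series"
begin


fun ee :: "int \<Rightarrow> nat \<Rightarrow> int" where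
  "ee q 0 = 0"
| "ee q (Suc j) = q * ee q j + (-1)^j"

lemma ee_sum: "ee q j + ee q (Suc j) = q ^ j"
proof (induction j)
  case 0 then show ?case by simp
next
  case (Suc j)
  have "ee q (Suc j) + ee q (Suc (Suc j)) = q * (ee q j + ee q (Suc j))"
    by (simp add: algebra_simps)
  then show ?case using Suc by simp
qed

lemma adj_idx: "l < N \<Longrightarrow> i < N \<Longrightarrow> complete_adj N $$ (l,i) = (if l = i then 0 else 1)"
  by (simp add: complete_adj_def)

lemma adj_dims[simp]: "dim_row (complete_adj N) = N" "dim_col (complete_adj N) = N"
  by (simp_all add: complete_adj_def)

lemma pow_entries:
  assumes "i < N" "i' < N"
  shows "(complete_adj N ^\<^sub>m j) $$ (i,i') = ee (int N - 1) j + (if i = i' then (-1)^j else 0)"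
  using assms
proof (induction j arbitrary: i')
  case 0
  then show ?case by simp
next
  case (Suc j)
  let ?e = "ee (int N - 1) j" and ?s = "(-1::int)^j"
  have "(complete_adj N ^\<^sub>m Suc j) $$ (i,i') =
     (\<Sum>l = 0..<N. (complete_adj N ^\<^sub>m j) $$ (i,l) * complete_adj N $$ (l,i'))"
    using Suc.prems by (simp add: scalar_prod_def)
  also have "\<dots> = (\<Sum>l = 0..<N. (?e + (if i = l then ?s else 0)) * (if l = i' then 0 else 1))"
    using Suc by (intro sum.cong) (auto simp: adj_idx)
  also have "\<dots> = (\<Sum>l = 0..<N. (?e + (if i = l then ?s else 0))) - (?e + (if i = i' then ?s else 0))"
  proof -
    have "(\<Sum>l = 0..<N. (?e + (if i = l then ?s else 0))) = 
       (?e + (if i = i' then ?s else 0)) + (\<Sum>l \<in> {0..<N} - {i'}. (?e + (if i = l then ?s else 0)))"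
      using Suc.prems by (subst sum.remove[of _ i']) auto
    moreover have "(\<Sum>l = 0..<N. (?e + (if i = l then ?s else 0)) * (if l = i' then 0 else 1))
       = 0 + (\<Sum>l \<in> {0..<N} - {i'}. (?e + (if i = l then ?s else 0)) * (if l = i' then 0 else 1))"
      using Suc.prems by (subst sum.remove[of _ i']) auto
    moreover have "(\<Sum>l \<in> {0..<N} - {i'}. (?e + (if i = l then ?s else 0)) * (if l = i' then 0 else 1))
       = (\<Sum>l \<in> {0..<N} - {i'}. (?e + (if i = l then ?s else 0)))"
      by (intro sum.cong) auto
    ultimately show ?thesis by simp
  qed
  also have "(\<Sum>l = 0..<N. (?e + (if i = l then ?s else 0))) = int N * ?e + ?s"
    using Suc.prems by (simp add: sum.distrib)
  finally show ?case by (auto simp: algebra_simps)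
qed


lemma compositions_finite: "finite (compositions k m)"
proof (rule finite_subset)
  show "compositions k m \<subseteq> {xs. set xs \<subseteq> {0..m} \<and> length xs = k}"
    by (auto simp: compositions_def intro: member_le_sum_list)
  show "finite {xs. set xs \<subseteq> {0..m::nat} \<and> length xs = k}"
    by (rule finite_lists_length_eq) simp
qed

lemma compositions_0: "compositions 0 m = (if m = 0 then {[]} else {})"
  by (auto simp: compositions_def)

lemma compositions_Suc:
  "compositions (Suc k) m = (\<lambda>(j,js). j # js) ` (SIGMA j:{1..m}. compositions k (m - j))"
proof
  show "compositions (Suc k) m \<subseteq> (\<lambda>(j,js). j # js) ` (SIGMA j:{1..m}. compositions k (m - j))"
  proof
    fix xs assume xs: "xs \<in> compositions (Suc k) m"
    then obtain j js where xj: "xs = j # js" by (cases xs) (auto simp: compositions_def)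
    with xs have "j \<in> {1..m}" "js \<in> compositions k (m - j)"
      by (auto simp: compositions_def)
    then show "xs \<in> (\<lambda>(j,js). j # js) ` (SIGMA j:{1..m}. compositions k (m - j))"
      using xj by force
  qed
  show "(\<lambda>(j,js). j # js) ` (SIGMA j:{1..m}. compositions k (m - j)) \<subseteq> compositions (Suc k) m"
    by (auto simp: compositions_def)
qed

lemma comp_sum_fps:
  fixes g :: "nat \<Rightarrow> int"
  defines "F \<equiv> Abs_fps (\<lambda>j. if j = 0 then 0 else g j)"
  shows "(\<Sum>js\<in>compositions k m. prod_list (map g js)) = fps_nth (F ^ k) m"
proof (induction k arbitrary: m)
  case 0
  then show ?case by (simp add: compositions_0)
next
  case (Suc k)
  have inj: "inj_on (\<lambda>(j,js). j # js) (SIGMA j:{1..m}. compositions k (m - j))"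
    by (auto simp: inj_on_def)
  have "(\<Sum>js\<in>compositions (Suc k) m. prod_list (map g js))
      = (\<Sum>(j,js)\<in>(SIGMA j:{1..m}. compositions k (m - j)). g j * prod_list (map g js))"
    unfolding compositions_Suc by (subst sum.reindex[OF inj]) (simp add: case_prod_unfold)
  also have "\<dots> = (\<Sum>j\<in>{1..m}. \<Sum>js\<in>compositions k (m - j). g j * prod_list (map g js))"
    by (rule sum.Sigma[symmetric]) (auto simp: compositions_finite)
  also have "\<dots> = (\<Sum>j\<in>{1..m}. g j * fps_nth (F ^ k) (m - j))"
    by (simp add: sum_distrib_left[symmetric] Suc.IH)
  also have "\<dots> = (\<Sum>j\<in>{0..m}. fps_nth F j * fps_nth (F ^ k) (m - j))"
  proof -
    have "(\<Sum>j\<in>{0..m}. fps_nth F j * fps_nth (F ^ k) (m - j)) = (\<Sum>j\<in>{1..m}. fps_nth F j * fps_nth (F ^ k) (m - j))"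
      by (rule sum.mono_neutral_right) (auto simp: F_def)
    also have "\<dots> = (\<Sum>j\<in>{1..m}. g j * fps_nth (F ^ k) (m - j))"
      by (rule sum.cong) (auto simp: F_def)
    finally show ?thesis by simp
  qed
  also have "\<dots> = fps_nth (F ^ Suc k) m"
    by (simp add: fps_mult_nth)
  finally show ?case .
qed


definition PP :: "int \<Rightarrow> nat \<Rightarrow> int fps" where
  "PP c k = Abs_fps (\<lambda>r. int ((k + r - 1) choose r) * c ^ r)"

lemma PP_0: "PP c 0 = 1"
  by (rule fps_ext) (auto simp: PP_def)

lemma PP_step: "(1 - fps_const c * fps_X) * PP c (Suc k) = PP c k"
proof (rule fps_ext)
  fix n
  show "fps_nth ((1 - fps_const c * fps_X) * PP c (Suc k)) n = fps_nth (PP c k) n"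
  proof (cases n)
    case 0 then show ?thesis by (simp add: PP_def left_diff_distrib mult.assoc)
  next
    case (Suc n')
    have "fps_nth ((1 - fps_const c * fps_X) * PP c (Suc k)) n
        = fps_nth (PP c (Suc k)) n - c * fps_nth (PP c (Suc k)) n'"
      using Suc by (simp add: left_diff_distrib mult.assoc)
    also have "\<dots> = int (Suc (k + n') choose Suc n') * c ^ Suc n' - c * (int ((k + n') choose n') * c ^ n')"
      using Suc by (simp add: PP_def)
    also have "\<dots> = int ((k + n') choose Suc n') * c ^ Suc n'"
      by (simp add: algebra_simps)
    also have "\<dots> = fps_nth (PP c k) n"
      using Suc by (simp add: PP_def)
    finally show ?thesis .
  qed
qed

lemma PP_inv: "(1 - fps_const c * fps_X) ^ k * PP c k = 1"
proof (induction k)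
  case 0 then show ?case by (simp add: PP_0)
next
  case (Suc k)
  have "(1 - fps_const c * fps_X) ^ Suc k * PP c (Suc k)
     = (1 - fps_const c * fps_X) ^ k * ((1 - fps_const c * fps_X) * PP c (Suc k))"
    by (simp add: mult.assoc mult.commute)
  then show ?case using Suc by (simp add: PP_step)
qed


definition aa :: "nat \<Rightarrow> nat \<Rightarrow> int" where
  "aa N j = (complete_adj N ^\<^sub>m j) $$ (0, 0)"

lemma aa_eq: "N \<ge> 1 \<Longrightarrow> aa N j = ee (int N - 1) j + (-1)^j"
  unfolding aa_def by (subst pow_entries) auto

lemma aa_sum: "N \<ge> 1 \<Longrightarrow> aa N j + aa N (Suc j) = (int N - 1) ^ j"
  using ee_sum[of "int N - 1" j] by (simp add: aa_eq)

lemma aa_1: "N \<ge> 1 \<Longrightarrow> aa N (Suc 0) = 0"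
  by (simp add: aa_eq)

lemma aa_2: "N \<ge> 1 \<Longrightarrow> aa N 2 = int N - 1"
  by (simp add: aa_eq numeral_2_eq_2)

definition FF :: "nat \<Rightarrow> int fps" where
  "FF N = Abs_fps (\<lambda>j. if j = 0 then 0 else aa N j)"

lemma lin_nth: fixes c :: int and G :: "int fps" shows "fps_nth ((1 - fps_const c * fps_X) * G) n
   = fps_nth G n - c * (if n = 0 then 0 else fps_nth G (n - 1))"
  by (cases n) (simp_all add: left_diff_distrib mult.assoc)

lemma FF_eq:
  assumes "N \<ge> 1"
  shows "(1 - fps_const (-1) * fps_X) * ((1 - fps_const (int N - 1) * fps_X) * FF N)
       = fps_const (int N - 1) * fps_X ^ 2"
proof (rule fps_ext)
  fix n
  let ?q = "int N - 1"
  show "fps_nth ((1 - fps_const (-1) * fps_X) * ((1 - fps_const ?q * fps_X) * FF N)) n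
      = fps_nth (fps_const ?q * fps_X ^ 2) n"
  proof (cases n)
    case 0 then show ?thesis by (simp add: lin_nth FF_def)
  next
    case (Suc n1)
    show ?thesis
    proof (cases n1)
      case 0 then show ?thesis using Suc assms by (simp add: lin_nth FF_def aa_1)
    next
      case (Suc n2)
      show ?thesis
      proof (cases n2)
        case 0 then show ?thesis using Suc \<open>n = Suc n1\<close> assms
          by (simp add: lin_nth FF_def aa_1 aa_2[simplified numeral_2_eq_2] numeral_2_eq_2)
      next
        case (Suc n3)
        have n: "n = Suc (Suc (Suc n3))" using Suc \<open>n1 = Suc n2\<close> \<open>n = Suc n1\<close> by simp
        have s1: "aa N (Suc (Suc n3)) + aa N (Suc (Suc (Suc n3))) = ?q ^ Suc (Suc n3)"
          using aa_sum[OF assms] by blast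
        have s2: "aa N (Suc n3) + aa N (Suc (Suc n3)) = ?q ^ Suc n3"
          using aa_sum[OF assms] by blast
        have "fps_nth ((1 - fps_const (-1) * fps_X) * ((1 - fps_const ?q * fps_X) * FF N)) n
          = (aa N (Suc (Suc n3)) + aa N (Suc (Suc (Suc n3)))) - ?q * (aa N (Suc n3) + aa N (Suc (Suc n3)))"
          using n by (simp add: lin_nth FF_def algebra_simps)
        also have "\<dots> = 0" unfolding s1 s2 by simp
        finally show ?thesis using n by (simp add: numeral_2_eq_2 fps_X_power_mult_nth)
      qed
    qed
  qed
qed

lemma FF_pow:
  assumes "N \<ge> 1"
  shows "FF N ^ k = fps_const ((int N - 1) ^ k) * (fps_X ^ (2 * k) * (PP (int N - 1) k * PP (-1) k))"
proof -
  let ?q = "int N - 1"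
  let ?A = "1 - fps_const (-1) * fps_X" and ?B = "1 - fps_const ?q * fps_X"
  have "(?A * ?B) ^ k * (PP ?q k * PP (-1) k) = (?A ^ k * PP (-1) k) * (?B ^ k * PP ?q k)"
    by (simp add: power_mult_distrib mult_ac)
  also have "\<dots> = 1" by (simp only: PP_inv) simp
  finally have one: "(?A * ?B) ^ k * (PP ?q k * PP (-1) k) = 1" .
  have "FF N ^ k * (?A * ?B) ^ k = (?A * (?B * FF N)) ^ k"
    by (simp add: power_mult_distrib mult_ac)
  also have "\<dots> = fps_const (?q ^ k) * fps_X ^ (2 * k)"
    using FF_eq[OF assms] by (simp add: power_mult_distrib power_mult[symmetric] mult.commute)
  finally have two: "FF N ^ k * (?A * ?B) ^ k = fps_const (?q ^ k) * fps_X ^ (2 * k)" .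
  have "FF N ^ k = FF N ^ k * ((?A * ?B) ^ k * (PP ?q k * PP (-1) k))"
    using one by simp
  also have "\<dots> = (FF N ^ k * (?A * ?B) ^ k) * (PP ?q k * PP (-1) k)"
    by (simp only: mult.assoc)
  also have "\<dots> = fps_const (?q ^ k) * (fps_X ^ (2 * k) * (PP ?q k * PP (-1) k))"
    using two by (simp only: mult.assoc)
  finally show ?thesis .
qed

lemma calA_FF: "calA N k m = fps_nth (FF N ^ k) m"
proof -
  have e: "(\<lambda>j. (complete_adj N ^\<^sub>m j) $$ (0,0)) = aa N" by (simp add: aa_def fun_eq_iff)
  show ?thesis unfolding calA_def FF_def e using comp_sum_fps[of "aa N" k m] by simp
qed

lemma calA_nth:
  assumes "N \<ge> 1"
  shows "calA N k m = (int N - 1) ^ k * (if m < 2 * k then 0 else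
     (\<Sum>i = 0..m - 2 * k. int ((k + i - 1) choose i) * (int N - 1) ^ i
        * (int ((k + (m - 2 * k - i) - 1) choose (m - 2 * k - i)) * (-1) ^ (m - 2 * k - i))))"
proof -
  have w: "fps_nth (PP (int N - 1) k * PP (-1) k) n = (\<Sum>i = 0..n. int ((k + i - 1) choose i) * (int N - 1) ^ i
        * (int ((k + (n - i) - 1) choose (n - i)) * (-1) ^ (n - i)))" for n
    by (simp only: fps_mult_nth PP_def fps_nth_Abs_fps)
  show ?thesis
    unfolding calA_FF FF_pow[OF assms] fps_mult_left_const_nth fps_X_power_mult_nth w ..
qed

lemma aa_closed: "N \<ge> 1 \<Longrightarrow> aa N (Suc m) = (\<Sum>j = 1..m. (-1) ^ (m - j) * (int N - 1) ^ j)"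
proof (induction m)
  case 0 then show ?case by (simp add: aa_1)
next
  case (Suc m)
  have "aa N (Suc (Suc m)) = (int N - 1) ^ Suc m - aa N (Suc m)"
    using aa_sum[OF Suc.prems, of "Suc m"] by simp
  also have "\<dots> = (int N - 1) ^ Suc m - (\<Sum>j = 1..m. (-1) ^ (m - j) * (int N - 1) ^ j)"
    using Suc by simp
  also have "(\<Sum>j = 1..m. (-1) ^ (m - j) * (int N - 1) ^ j) = - (\<Sum>j = 1..m. (-1) ^ (Suc m - j) * (int N - 1) ^ j)"
    by (auto simp: sum_negf[symmetric] Suc_diff_le intro!: sum.cong)
  finally show ?case by simp
qed


theorem mainTheorem2:
  fixes N :: nat
  assumes "N \<ge> 2"
  shows "(\<forall>k m. 1 \<le> k \<longrightarrow> 1 \<le> m \<longrightarrow> 2 * k > m \<longrightarrow> calA N k m = 0)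
    \<and> (\<forall>k m. 1 \<le> k \<longrightarrow> 1 \<le> m \<longrightarrow> 2 * k \<le> m \<longrightarrow>
          calA N k m = (-1) ^ m * (int N - 1) ^ k *
            (\<Sum>r = 0..m - 2 * k. int ((k + r - 1) choose r) * int ((m - k - r - 1) choose (m - 2 * k - r))
               * (-1) ^ r * (int N - 1) ^ r))
    \<and> (\<forall>m. 1 \<le> m \<longrightarrow>
          calA N 1 m = (\<Sum>j = 1..m - 1. (-1) ^ (m - 1 - j) * (int N - 1) ^ j))"
proof (intro conjI allI impI)
  have N1: "N \<ge> 1" using assms by simp
  fix k m :: nat
  assume "1 \<le> k" "1 \<le> m" "2 * k > m"
  then show "calA N k m = 0" by (simp add: calA_nth[OF N1])
next
  have N1: "N \<ge> 1" using assms by simp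
  fix k m :: nat
  assume k: "1 \<le> k" and "1 \<le> m" and km: "2 * k \<le> m"
  let ?q = "int N - 1" and ?n = "m - 2 * k"
  have "calA N k m = ?q ^ k * (\<Sum>i = 0..?n. int ((k + i - 1) choose i) * ?q ^ i
        * (int ((k + (?n - i) - 1) choose (?n - i)) * (-1) ^ (?n - i)))"
    using km by (simp add: calA_nth[OF N1])
  also have "\<dots> = ?q ^ k * (\<Sum>r = 0..?n. (-1) ^ m * (int ((k + r - 1) choose r) * int ((m - k - r - 1) choose (m - 2 * k - r))
               * (-1) ^ r * ?q ^ r))"
  proof (intro arg_cong[where f = "\<lambda>x. ?q ^ k * x"] sum.cong refl)
    fix r assume r: "r \<in> {0..?n}"
    have i1: "k + (?n - r) - 1 = m - k - r - 1" using r km by auto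
    have "(-1::int) ^ m = (-1) ^ ((?n - r) + r + 2 * k)" using r km by simp
    also have "\<dots> = (-1) ^ (?n - r) * (-1) ^ r"
      by (simp add: power_add power_mult)
    finally have c: "(-1::int) ^ m = (-1) ^ (?n - r) * (-1) ^ r" .
    have rr: "(-1::int) ^ r * (-1) ^ r = 1"
      by (simp flip: power_add add: mult_2[symmetric] power_mult)
    have "(-1::int) ^ m * (-1) ^ r = (-1) ^ (?n - r) * ((-1) ^ r * (-1) ^ r)"
      unfolding c by (simp only: mult.assoc)
    then have "(-1::int) ^ m * (-1) ^ r = (-1) ^ (?n - r)" unfolding rr by simp
    then show "int ((k + r - 1) choose r) * ?q ^ r * (int ((k + (?n - r) - 1) choose (?n - r)) * (-1) ^ (?n - r))
      = (-1) ^ m * (int ((k + r - 1) choose r) * int ((m - k - r - 1) choose (m - 2 * k - r)) * (-1) ^ r * ?q ^ r)"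
      unfolding i1 by (simp add: mult_ac)
  qed
  also have "\<dots> = (-1) ^ m * ?q ^ k * (\<Sum>r = 0..m - 2 * k. int ((k + r - 1) choose r) * int ((m - k - r - 1) choose (m - 2 * k - r))
               * (-1) ^ r * ?q ^ r)"
    by (simp add: sum_distrib_left mult_ac)
  finally show "calA N k m = (-1) ^ m * ?q ^ k * (\<Sum>r = 0..m - 2 * k. int ((k + r - 1) choose r) * int ((m - k - r - 1) choose (m - 2 * k - r))
               * (-1) ^ r * ?q ^ r)" .
next
  have N1: "N \<ge> 1" using assms by simp
  fix m :: nat
  assume m: "1 \<le> m"
  then obtain m' where m': "m = Suc m'" by (cases m) auto
  have "calA N 1 m = aa N m"
    unfolding calA_FF using m by (simp add: FF_def)
  then show "calA N 1 m = (\<Sum>j = 1..m - 1. (-1) ^ (m - 1 - j) * (int N - 1) ^ j)"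
    using aa_closed[OF N1, of m'] m' by simp
qed

end
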